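(* Let $n\geq 2L(3,1)$ and let $\mathcal{F},\mathcal{G}\subseteq\Pi(n,3)$ be non-trivial cross $1$-intersecting families maximizing $|\mathcal{F}||\mathcal{G}|$ (among all such pairs). If $|\mathcal{F}|\leq|\mathcal{G}|$, then $\mathcal{F}=\mathcal{A}(3,\{A\},M)$ and $\mathcal{G}=\mathcal{B}(3,\{A\},M)$ for some singleton $A$ and some $3$-partition $M$ (of a subset of $[n]$) with $A\in M$ and $|\cup M|<n$.
   Context: $[n]=\{1,\ldots,n\}$. A partition is a set of pairwise disjoint nonempty sets (blocks); $\cup P$ is the union of its blocks. $\Pi(n,k)$ is the set of partitions of $[n]$ into $k$ blocks. $F\cap G$ is the set of common blocks. $L(k,t):=(t+1)+(k-t+1)\log_2((t+1)(k-t+1))$, so $L(3,1)=2+3\log_2 6$. $\mathcal{F},\mathcal{G}$ are cross $1$-intersecting if $|F\cap G|\geq1$ for all $F\in\mathcal{F},G\in\mathcal{G}$; non-trivial if no block belongs to every member of $\mathcal{F}\cup\mathcal{G}$. For an $\ell$-partition $M$ and $X\subseteq M$ with $|X|=t$, $\overline{\cup M}=[n]\setminus\cup M$, $\mathcal{A}(k,X,M)=\{F\in\Pi(n,k):X\subseteq F,\ F\cap(M\setminus X)\neq\emptyset\}$ and $\mathcal{B}(\ell,X,M)=\{F\in\Pi(n,\ell):X\subseteq F\}\cup\{(M\setminus\{B\})\cup\{B\cup\overline{\cup M}\}:B\in X\}$. *)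

theory Defs
  imports Complex_Main
begin

definition is_partition :: "nat set set \<Rightarrow> bool" where
  "is_partition P \<longleftrightarrow> (\<forall>B\<in>P. B \<noteq> {}) \<and> (\<forall>B\<in>P. \<forall>C\<in>P. B \<noteq> C \<longrightarrow> B \<inter> C = {})"

definition Pi_part :: "nat \<Rightarrow> nat \<Rightarrow> nat set set set" where
  "Pi_part n k = {P. is_partition P \<and> \<Union>P = {1..n} \<and> card P = k}"

definition L :: "nat \<Rightarrow> nat \<Rightarrow> real" where
  "L k t = real (t + 1) + real (k - t + 1) * log 2 (real ((t + 1) * (k - t + 1)))"

definition cross_intersecting :: "nat set set set \<Rightarrow> nat set set set \<Rightarrow> bool" where
  "cross_intersecting \<F> \<G> \<longleftrightarrow> (\<forall>F\<in>\<F>. \<forall>G\<in>\<G>. card (F \<inter> G) \<ge> 1)"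

definition non_trivial :: "nat set set set \<Rightarrow> nat set set set \<Rightarrow> bool" where
  "non_trivial \<F> \<G> \<longleftrightarrow> \<not> (\<exists>B. \<forall>P \<in> \<F> \<union> \<G>. B \<in> P)"

definition A_fam :: "nat \<Rightarrow> nat \<Rightarrow> nat set set \<Rightarrow> nat set set \<Rightarrow> nat set set set" where
  "A_fam n k X M = {F \<in> Pi_part n k. X \<subseteq> F \<and> F \<inter> (M - X) \<noteq> {}}"

definition B_fam :: "nat \<Rightarrow> nat \<Rightarrow> nat set set \<Rightarrow> nat set set \<Rightarrow> nat set set set" where
  "B_fam n l X M = {F \<in> Pi_part n l. X \<subseteq> F}
     \<union> {(M - {B}) \<union> {B \<union> ({1..n} - \<Union>M)} | B. B \<in> X}"

end

theory Submission
  imports Defs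
begin

lemma PiD: assumes "Q \<in> Pi_part n k"
  shows "\<Union>Q = {1..n}" "card Q = k" "X \<in> Q \<Longrightarrow> X \<noteq> {}" "X \<in> Q \<Longrightarrow> X \<subseteq> {1..n}"
    "X \<in> Q \<Longrightarrow> Y \<in> Q \<Longrightarrow> X \<noteq> Y \<Longrightarrow> X \<inter> Y = {}"
  using assms unfolding Pi_part_def is_partition_def by auto

lemma finite_Pi: "finite (Pi_part n k)"
proof -
  have "Pi_part n k \<subseteq> Pow (Pow {1..n})" unfolding Pi_part_def by auto
  then show ?thesis by (rule finite_subset) auto
qed

lemma finite_blocks: "Q \<in> Pi_part n k \<Longrightarrow> finite Q"
  by (metis PiD(1) finite_UnionD finite_atLeastAtMost)

lemma KL: assumes Q: "Q \<in> Pi_part n 3" and X: "X \<in> Q" and Y: "Y \<in> Q" and XY: "X \<noteq> Y"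
  shows "Q = {X, Y, {1..n} - (X \<union> Y)}"
proof -
  have fQ: "finite Q" by (rule finite_blocks[OF Q])
  have "card (Q - {X,Y}) = 1" using PiD(2)[OF Q] X Y XY fQ by (simp add: card_Diff_subset)
  then obtain Z where Zd: "Q - {X,Y} = {Z}" by (rule card_1_singletonE)
  then have Z: "Z \<in> Q" "Z \<noteq> X" "Z \<noteq> Y" by auto
  have QZ: "Q = {X,Y,Z}" using Zd X Y by blast
  have "Z \<inter> X = {}" "Z \<inter> Y = {}" using PiD(5)[OF Q] Z X Y by auto
  moreover have "X \<union> Y \<union> Z = {1..n}" using PiD(1)[OF Q] QZ by (simp add: Un_assoc)
  ultimately have "Z = {1..n} - (X \<union> Y)" by blast
  then show ?thesis using QZ by simp
qed
lemma cross_ex: "cross_intersecting A B \<Longrightarrow> F \<in> A \<Longrightarrow> G \<in> B \<Longrightarrow> \<exists>C. C \<in> F \<and> C \<in> G"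
  unfolding cross_intersecting_def by (metis card.empty disjoint_iff not_one_le_zero)

lemma common_le2:
  assumes X: "\<X> \<subseteq> Pi_part n 3" and Y: "\<Y> \<subseteq> Pi_part n 3"
    and cr: "\<forall>F\<in>\<X>. \<forall>G\<in>\<Y>. \<exists>C. C \<in> F \<and> C \<in> G"
    and A: "\<forall>F\<in>\<X>. A \<in> F" and G0: "G0 \<in> \<Y>" "A \<notin> G0"
  shows "\<X> \<subseteq> (\<lambda>C. {A, C, {1..n} - (A \<union> C)}) ` {C \<in> G0. C \<inter> A = {}}"
    and "\<X> \<noteq> {} \<Longrightarrow> card {C \<in> G0. C \<inter> A = {}} \<le> 2"
    and "\<forall>C \<in> {C \<in> G0. C \<inter> A = {}}. C \<noteq> {} \<and> C \<subseteq> {1..n}"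
    and "\<X> \<noteq> {} \<Longrightarrow> A \<noteq> {} \<and> A \<subseteq> {1..n}"
proof -
  have G0P: "G0 \<in> Pi_part n 3" using G0 Y by auto
  show "\<X> \<subseteq> (\<lambda>C. {A, C, {1..n} - (A \<union> C)}) ` {C \<in> G0. C \<inter> A = {}}"
  proof
    fix F assume F: "F \<in> \<X>"
    then obtain C where C: "C \<in> F" "C \<in> G0" using cr G0 by blast
    have FP: "F \<in> Pi_part n 3" using F X by auto
    have "C \<noteq> A" using C G0 by auto
    have AF: "A \<in> F" using A F by blast
    have "C \<inter> A = {}" using PiD(5)[OF FP C(1) AF \<open>C \<noteq> A\<close>] .
    moreover have "F = {A, C, {1..n} - (A \<union> C)}" using KL[OF FP AF C(1)] \<open>C \<noteq> A\<close> by auto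
    ultimately show "F \<in> (\<lambda>C. {A, C, {1..n} - (A \<union> C)}) ` {C \<in> G0. C \<inter> A = {}}" using C by blast
  qed
  show "\<forall>C \<in> {C \<in> G0. C \<inter> A = {}}. C \<noteq> {} \<and> C \<subseteq> {1..n}" using PiD(3,4)[OF G0P] by auto
  show "A \<noteq> {} \<and> A \<subseteq> {1..n}" if ne2: "\<X> \<noteq> {}"
  proof -
    obtain F where F: "F \<in> \<X>" using ne2 by auto
    then have "F \<in> Pi_part n 3" "A \<in> F" using X A by auto
    then show ?thesis using PiD(3,4) by metis
  qed
  show "card {C \<in> G0. C \<inter> A = {}} \<le> 2" if ne: "\<X> \<noteq> {}"
  proof -
    from ne obtain F where F: "F \<in> \<X>" by auto
    have FP: "F \<in> Pi_part n 3" using F X by auto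
    have "A \<noteq> {}" "A \<subseteq> {1..n}" using PiD(3,4)[OF FP] A F by auto
    then obtain a where a: "a \<in> A" "a \<in> {1..n}" by blast
    have "a \<in> \<Union>G0" using PiD(1)[OF G0P] a(2) by simp
    then obtain C0 where C0: "C0 \<in> G0" "a \<in> C0" by blast
    have "{C \<in> G0. C \<inter> A = {}} \<subseteq> G0 - {C0}" using C0 a by auto
    then have "card {C \<in> G0. C \<inter> A = {}} \<le> card (G0 - {C0})"
      by (rule card_mono[rotated]) (use finite_blocks[OF G0P] in auto)
    also have "\<dots> = 2" using C0 PiD(2)[OF G0P] finite_blocks[OF G0P] by simp
    finally show ?thesis .
  qed
qed

lemma count_up:
  shows "card {Q \<in> Pi_part n 3. B \<in> Q} + 1 \<le> 2 ^ (n - card B - 1)"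
proof (cases "{Q \<in> Pi_part n 3. B \<in> Q} = {}")
  case True show ?thesis unfolding True by simp
next
  case False
  define S where "S = {Q \<in> Pi_part n 3. B \<in> Q}"
  from False obtain Q0 where Q0: "Q0 \<in> Pi_part n 3" "B \<in> Q0" by auto
  have Bsub: "B \<subseteq> {1..n}" using PiD(4)[OF Q0(1) Q0(2)] .
  have fB: "finite B" using Bsub finite_subset by blast
  have "card (Q0 - {B}) = 2" using PiD(2)[OF Q0(1)] finite_blocks[OF Q0(1)] Q0(2) by simp
  then have "Q0 - {B} \<noteq> {}" by (metis card.empty zero_neq_numeral)
  then obtain Y where Y: "Y \<in> Q0" "Y \<noteq> B" by blast
  have "Y \<noteq> {}" "Y \<subseteq> {1..n}" "Y \<inter> B = {}" using PiD(3,4,5)[OF Q0(1)] Y Q0(2) by auto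
  then obtain c where c: "c \<in> {1..n}" "c \<notin> B" by blast
  define T where "T = {1..n} - B - {c}"
  define \<phi> where "\<phi> Q = (SOME X. X \<in> Q \<and> X \<noteq> B \<and> c \<notin> X)" for Q
  have phi: "\<phi> Q \<in> Q \<and> \<phi> Q \<noteq> B \<and> c \<notin> \<phi> Q" if Q: "Q \<in> S" for Q
  proof -
    have QP: "Q \<in> Pi_part n 3" and BQ: "B \<in> Q" using Q S_def by auto
    have "c \<in> \<Union>Q" using PiD(1)[OF QP] c by simp
    then obtain C where C: "C \<in> Q" "c \<in> C" by blast
    have CB: "C \<noteq> B" using C c by auto
    have "Q = {B, C, {1..n} - (B \<union> C)}" using KL[OF QP BQ C(1)] CB by auto
    moreover have "{1..n} - (B \<union> C) \<in> Q" using calculation by blast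
    moreover have "{1..n} - (B \<union> C) \<noteq> B"
      using PiD(3)[OF QP BQ] by blast
    ultimately have "\<exists>X. X \<in> Q \<and> X \<noteq> B \<and> c \<notin> X" using C by blast
    then show ?thesis unfolding \<phi>_def by (rule someI_ex)
  qed
  have img: "\<phi> ` S \<subseteq> Pow T - {{}}"
  proof
    fix D assume "D \<in> \<phi> ` S"
    then obtain Q where Q: "Q \<in> S" "D = \<phi> Q" by auto
    have QP: "Q \<in> Pi_part n 3" and BQ: "B \<in> Q" using Q S_def by auto
    have "D \<in> Q" "D \<noteq> B" "c \<notin> D" using phi[OF Q(1)] Q(2) by auto
    then have "D \<noteq> {}" "D \<subseteq> {1..n}" "D \<inter> B = {}" using PiD(3,4,5)[OF QP] BQ by auto
    then show "D \<in> Pow T - {{}}" using \<open>c \<notin> D\<close> T_def by auto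
  qed
  have inj: "inj_on \<phi> S"
  proof
    fix Q1 Q2 assume Q1: "Q1 \<in> S" and Q2: "Q2 \<in> S" and eq: "\<phi> Q1 = \<phi> Q2"
    have "Q1 = {B, \<phi> Q1, {1..n} - (B \<union> \<phi> Q1)}"
      using KL[of Q1 n B "\<phi> Q1"] phi[OF Q1] Q1 S_def by auto
    moreover have "Q2 = {B, \<phi> Q2, {1..n} - (B \<union> \<phi> Q2)}"
      using KL[of Q2 n B "\<phi> Q2"] phi[OF Q2] Q2 S_def by auto
    ultimately show "Q1 = Q2" using eq by simp
  qed
  have fT: "finite T" unfolding T_def by simp
  have cT: "card T = n - card B - 1"
  proof -
    have "card ({1..n} - B) = n - card B" using Bsub fB by (simp add: card_Diff_subset)
    moreover have "c \<in> {1..n} - B" using c by simp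
    ultimately show ?thesis unfolding T_def by (simp add: card_Diff_singleton)
  qed
  have "card S = card (\<phi> ` S)" using inj by (simp add: card_image)
  also have "\<dots> \<le> card (Pow T - {{}})" using img fT by (intro card_mono) auto
  also have "\<dots> = 2 ^ card T - 1" using fT by (simp add: card_Pow)
  finally have "card S \<le> 2 ^ card T - 1" .
  moreover have "(1::nat) \<le> 2 ^ card T" by simp
  ultimately have "card S + 1 \<le> 2 ^ card T" by linarith
  then show ?thesis using cT S_def by simp
qed

lemma count_low:
  assumes n: "n \<ge> 3"
  shows "2 ^ (n - 2) \<le> card {Q \<in> Pi_part n 3. {1} \<in> Q} + 1"
proof -
  define U where "U = {3..n}"
  have U1: "(1::nat) \<notin> U" and U2: "(2::nat) \<notin> U" unfolding U_def by simp_all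
  have U12: "{1,2} \<union> U = {1..n}" unfolding U_def using n by (auto simp: atLeastAtMost_iff)
  define \<psi> where "\<psi> D = {{1::nat}, insert 2 D, U - D}" for D
  define Dom where "Dom = Pow U - {U}"
  have img: "\<psi> ` Dom \<subseteq> {Q \<in> Pi_part n 3. {1} \<in> Q}"
  proof
    fix Q assume "Q \<in> \<psi> ` Dom"
    then obtain D where D: "D \<subseteq> U" "D \<noteq> U" "Q = \<psi> D" unfolding Dom_def by blast
    have ne: "U - D \<noteq> {}" using D by blast
    have d1: "{1::nat} \<noteq> insert 2 D" by auto
    have d2: "{1::nat} \<noteq> U - D" using U1 by blast
    have d3: "insert 2 D \<noteq> U - D" using U2 by blast
    have un: "\<Union>Q = {1..n}"
    proof -
      have "\<Union>Q = {1} \<union> insert 2 D \<union> (U - D)" unfolding D(3) \<psi>_def by simp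
      also have "\<dots> = {1,2} \<union> U" using D(1) by blast
      finally show ?thesis using U12 by simp
    qed
    have i1: "{1::nat} \<inter> insert 2 D = {}" "{1::nat} \<inter> (U - D) = {}" "insert 2 D \<inter> (U - D) = {}"
      using D(1) U1 U2 by auto
    have part: "is_partition Q" unfolding is_partition_def D(3) \<psi>_def
      using ne i1 by (simp add: Int_commute)
    have "card Q = 3" unfolding D(3) \<psi>_def using d1 d2 d3 by simp
    moreover have "{1} \<in> Q" unfolding D(3) \<psi>_def by simp
    ultimately show "Q \<in> {Q \<in> Pi_part n 3. {1} \<in> Q}" using un part
      unfolding Pi_part_def by blast
  qed
  have inj: "inj_on \<psi> Dom"
  proof
    fix D1 D2 assume D1: "D1 \<in> Dom" and D2: "D2 \<in> Dom" and eq: "\<psi> D1 = \<psi> D2"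
    have "insert 2 D1 \<in> \<psi> D1" unfolding \<psi>_def by simp
    then have "insert 2 D1 \<in> \<psi> D2" using eq by simp
    then have "insert 2 D1 = {1} \<or> insert 2 D1 = insert 2 D2 \<or> insert 2 D1 = U - D2"
      unfolding \<psi>_def by blast
    moreover have "insert 2 D1 \<noteq> {1}" by auto
    moreover have "insert 2 D1 \<noteq> U - D2" using U2 by blast
    ultimately have "insert 2 D1 = insert 2 D2" by blast
    moreover have "2 \<notin> D1" "2 \<notin> D2" using D1 D2 U2 unfolding Dom_def by blast+
    ultimately show "D1 = D2" by (metis Diff_insert_absorb)
  qed
  have cU: "card U = n - 2" using U_def by simp
  have fU: "finite U" using U_def by simp
  have "card (\<psi> ` Dom) = card Dom" by (rule card_image[OF inj])
  moreover have "card Dom = 2 ^ (n - 2) - 1" unfolding Dom_def using cU fU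
    by (simp add: card_Diff_singleton card_Pow)
  ultimately have "2 ^ (n - 2) - 1 = card (\<psi> ` Dom)" by simp
  also have "\<dots> \<le> card {Q \<in> Pi_part n 3. {1} \<in> Q}"
    by (rule card_mono[OF _ img]) (simp add: finite_Pi)
  finally show ?thesis by simp
qed

lemma xyz_ineq: fixes x y z :: nat assumes "x \<ge> 1" "y \<ge> 1" "z \<ge> 1"
  shows "x*y + y*z + z*x \<le> 2*x*y*z + 1"
proof -
  obtain p q r where "x = p + 1" "y = q + 1" "z = r + 1" using assms
    by (metis le_add_diff_inverse2)
  then show ?thesis by (simp add: algebra_simps)
qed

lemma pow3: fixes b1 b2 b3 :: nat assumes "b1 \<ge> 1" "b2 \<ge> 1" "b3 \<ge> 1"
  shows "2^(b1+b2+b3-b1-1) + 2^(b1+b2+b3-b2-1) + 2^(b1+b2+b3-b3-1) \<le> 2^(b1+b2+b3-1) + (2::nat)"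
proof -
  obtain c1 c2 c3 where c: "b1 = c1 + 1" "b2 = c2 + 1" "b3 = c3 + 1" using assms
    by (metis le_add_diff_inverse2)
  have e1: "b1+b2+b3-b1-1 = c2+c3+1" "b1+b2+b3-b2-1 = c1+c3+1" "b1+b2+b3-b3-1 = c1+c2+1"
    "b1+b2+b3-1 = c1+c2+c3+2" using c by simp_all
  have "(2::nat)^c1 * 2^c2 + 2^c2 * 2^c3 + 2^c3 * 2^c1 \<le> 2 * 2^c1 * 2^c2 * 2^c3 + 1"
    by (rule xyz_ineq) simp_all
  then have "2 * ((2::nat)^c1 * 2^c2 + 2^c2 * 2^c3 + 2^c3 * 2^c1) \<le> 2 * (2 * 2^c1 * 2^c2 * 2^c3) + 2"
    by simp
  then show ?thesis unfolding e1 by (simp add: power_add algebra_simps)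
qed

lemma mk3: assumes "X \<noteq> {}" "Y \<noteq> {}" "X \<subseteq> {1..n}" "Y \<subseteq> {1..n}" "X \<inter> Y = {}"
    "X \<union> Y \<noteq> {1..n}"
  shows "{X, Y, {1..n} - (X \<union> Y)} \<in> Pi_part n 3"
proof -
  have r: "{1..n} - (X \<union> Y) \<noteq> {}" using assms by blast
  have d: "X \<noteq> Y" "X \<noteq> {1..n} - (X \<union> Y)" "Y \<noteq> {1..n} - (X \<union> Y)"
    using assms(1,2,5) by auto
  have i: "X \<inter> ({1..n} - (X \<union> Y)) = {}" "Y \<inter> ({1..n} - (X \<union> Y)) = {}" by auto
  have "is_partition {X, Y, {1..n} - (X \<union> Y)}" unfolding is_partition_def
    using assms(1,2,5) r i by (simp add: Int_commute)
  moreover have "\<Union>{X, Y, {1..n} - (X \<union> Y)} = {1..n}" using assms(3,4) by auto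
  moreover have "card {X, Y, {1..n} - (X \<union> Y)} = 3" using d by simp
  ultimately show ?thesis unfolding Pi_part_def by blast
qed

lemma notin3: "x \<noteq> a \<Longrightarrow> x \<noteq> b \<Longrightarrow> x \<noteq> c \<Longrightarrow> x \<notin> {a, b, c}" by simp
lemma in3: "x \<in> {a, b, c} \<Longrightarrow> x = a \<or> x = b \<or> x = c" by simp
lemma neqI: "x \<in> A \<Longrightarrow> x \<notin> B \<Longrightarrow> A \<noteq> B" by blast

lemma construction: assumes n: "n \<ge> 4"
  shows "\<exists>F' G'. F' \<subseteq> Pi_part n 3 \<and> G' \<subseteq> Pi_part n 3 \<and> cross_intersecting F' G' \<and>
     non_trivial F' G' \<and> 2^(n-1) \<le> card F' * card G'"
proof -
  define P1 where "P1 = {{1::nat}, {2}, {1..n} - ({1} \<union> {2})}"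
  define P2 where "P2 = {{1::nat}, {3}, {1..n} - ({1} \<union> {3})}"
  define E where "E = {{2::nat}, {3}, {1..n} - ({2} \<union> {3})}"
  define S where "S = {Q \<in> Pi_part n 3. {1} \<in> Q}"
  have i4: "(4::nat) \<in> {1..n}" "(1::nat) \<in> {1..n}" "(2::nat) \<in> {1..n}" "(3::nat) \<in> {1..n}"
    using n by auto
  have ne4: "{a::nat} \<union> {b} \<noteq> {1..n}" if "a \<le> 3" "b \<le> 3" for a b
  proof -
    have "(4::nat) \<notin> {a} \<union> {b}" using that by auto
    then show ?thesis using i4(1) by blast
  qed
  have P1P: "P1 \<in> Pi_part n 3" unfolding P1_def by (rule mk3) (use i4 ne4 in auto)
  have P2P: "P2 \<in> Pi_part n 3" unfolding P2_def by (rule mk3) (use i4 ne4 in auto)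
  have EP: "E \<in> Pi_part n 3" unfolding E_def by (rule mk3) (use i4 ne4 in auto)
  have nsing: "{1..n} - ({a} \<union> {b}) \<noteq> {c}" if "a \<le> 3" "b \<le> 3" for a b c :: nat
  proof
    assume eq: "{1..n} - ({a} \<union> {b}) = {c}"
    have "4 \<in> {1..n} - ({a} \<union> {b})" using i4 that by auto
    then have c4: "c = 4" unfolding eq by simp
    have h: "x \<in> {a, b}" if "x \<in> {1..n}" "x \<noteq> 4" for x
    proof (rule ccontr)
      assume "x \<notin> {a, b}"
      then have "x \<in> {1..n} - ({a} \<union> {b})" using that by blast
      then have "x \<in> {c}" unfolding eq .
      then show False using c4 that(2) by simp
    qed
    have "1 \<in> {a,b}" by (rule h) (use i4 in simp_all)
    moreover have "2 \<in> {a,b}" by (rule h) (use i4 in simp_all)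
    moreover have "3 \<in> {a,b}" by (rule h) (use i4 in simp_all)
    ultimately show False by auto
  qed
  have P12: "P1 \<noteq> P2"
  proof
    assume "P1 = P2"
    moreover have "{2} \<in> P1" unfolding P1_def by simp
    ultimately have "{2} \<in> P2" by simp
    moreover have "{2::nat} \<noteq> {1}" "{2::nat} \<noteq> {3}" by simp_all
    ultimately show False unfolding P2_def using nsing[of 1 3 2] by simp
  qed
  have "E \<notin> S"
  proof
    assume "E \<in> S" then have "{1} \<in> E" unfolding S_def by simp
    moreover have "{1::nat} \<noteq> {2}" "{1::nat} \<noteq> {3}" by simp_all
    ultimately show False unfolding E_def using nsing[of 2 3 1] by simp
  qed
  have cS: "card (insert E S) = card S + 1" using \<open>E \<notin> S\<close> finite_Pi[of n 3] S_def by simp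
  have low: "2 ^ (n - 2) \<le> card S + 1" using count_low[of n] n S_def by simp
  have cF: "card {P1, P2} = 2" using P12 by simp
  have sub1: "{P1, P2} \<subseteq> Pi_part n 3" using P1P P2P by simp
  have sub2: "insert E S \<subseteq> Pi_part n 3" using EP S_def by auto
  have fin: "finite Q" if "Q \<in> Pi_part n 3" for Q using finite_blocks that by blast
  have cr: "cross_intersecting {P1, P2} (insert E S)"
    unfolding cross_intersecting_def
  proof (intro ballI)
    fix F G assume F: "F \<in> {P1, P2}" and G: "G \<in> insert E S"
    have "\<exists>C. C \<in> F \<and> C \<in> G"
    proof (cases "G = E")
      case True
      have m: "{2} \<in> P1" "{2} \<in> E" "{3} \<in> P2" "{3} \<in> E" unfolding P1_def P2_def E_def by simp_all
      from F have "F = P1 \<or> F = P2" by blast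
      then show ?thesis using m True by blast
    next
      case False
      then have "{1} \<in> G" using G S_def by auto
      have m: "{1} \<in> P1" "{1} \<in> P2" unfolding P1_def P2_def by simp_all
      from F have "F = P1 \<or> F = P2" by blast
      then show ?thesis using m \<open>{1} \<in> G\<close> by blast
    qed
    then obtain C where "C \<in> F \<inter> G" by blast
    moreover have "finite (F \<inter> G)" using fin F sub1 by blast
    ultimately show "1 \<le> card (F \<inter> G)"
      by (metis One_nat_def Suc_leI card_gt_0_iff empty_iff)
  qed
  have nt: "non_trivial {P1, P2} (insert E S)"
    unfolding non_trivial_def
  proof
    assume "\<exists>B. \<forall>P\<in>{P1, P2} \<union> insert E S. B \<in> P"
    then obtain B where hB: "\<forall>P\<in>{P1, P2} \<union> insert E S. B \<in> P" by blast
    have BB: "B \<in> P1" "B \<in> P2" "B \<in> E" using hB by simp_all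
    have n21: "{2::nat} \<noteq> {1}" "{2::nat} \<noteq> {3}" "{3::nat} \<noteq> {1}" "{3::nat} \<noteq> {2}" by simp_all
    have r1: "{2} \<noteq> {1..n} - ({1::nat} \<union> {3})" by (rule not_sym, rule nsing) simp_all
    have r2: "{3} \<noteq> {1..n} - ({1::nat} \<union> {2})" by (rule not_sym, rule nsing) simp_all
    have x1: "{2} \<notin> P2" unfolding P2_def by (rule notin3[OF n21(1) n21(2) r1])
    have x2: "{3} \<notin> P1" unfolding P1_def by (rule notin3[OF n21(3) n21(4) r2])
    have m: "1 \<in> {1..n} - ({2::nat} \<union> {3})" "2 \<notin> {1..n} - ({2::nat} \<union> {3})"
        "4 \<in> {1..n} - ({2::nat} \<union> {3})" "(4::nat) \<notin> {1}" "(4::nat) \<notin> {2}"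
        "1 \<notin> {1..n} - ({1::nat} \<union> {2})" using i4 by auto
    have x3: "{1..n} - ({2} \<union> {3}) \<notin> P1" unfolding P1_def
      by (rule notin3[OF neqI[OF m(3) m(4)] neqI[OF m(3) m(5)] neqI[OF m(1) m(6)]])
    have "B = {2} \<or> B = {3} \<or> B = {1..n} - ({2} \<union> {3})" using BB(3) unfolding E_def by (rule in3)
    then show False
    proof (elim disjE)
      assume "B = {2}" then show False using BB(2) x1 by simp
    next
      assume "B = {3}" then show False using BB(1) x2 by simp
    next
      assume "B = {1..n} - ({2} \<union> {3})" then show False using BB(1) x3 by simp
    qed
  qed
  have "2 ^ (n - 1) = 2 * 2 ^ (n - 2)" using n
  proof -
    have "n - 1 = Suc (n - 2)" using n by simp
    then show ?thesis by simp
  qed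
  also have "\<dots> \<le> card {P1, P2} * card (insert E S)" using cF cS low by simp
  finally have bd: "2 ^ (n - 1) \<le> card {P1, P2} * card (insert E S)" .
  show ?thesis
    apply (rule exI[of _ "{P1, P2}"])
    apply (rule exI[of _ "insert E S"])
    using sub1 sub2 cr nt bd by simp
qed

lemma nocommon:
  assumes X: "\<X> \<subseteq> Pi_part n 3" and Y: "\<Y> \<subseteq> Pi_part n 3"
    and cr: "\<forall>F\<in>\<X>. \<forall>G\<in>\<Y>. \<exists>C. C \<in> F \<and> C \<in> G"
    and ne: "\<X> \<noteq> {}" and nc: "\<not> (\<exists>A. \<forall>F\<in>\<X>. A \<in> F)"
  shows "card \<Y> \<le> 9"
proof -
  obtain F1 where F1: "F1 \<in> \<X>" using ne by blast
  have F1P: "F1 \<in> Pi_part n 3" using F1 X by blast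
  define f where "f B = (SOME F. F \<in> \<X> \<and> B \<notin> F)" for B
  have f: "f B \<in> \<X> \<and> B \<notin> f B" for B
  proof -
    have "\<exists>F. F \<in> \<X> \<and> B \<notin> F" using nc by blast
    then show ?thesis unfolding f_def by (rule someI_ex)
  qed
  define k where "k B B' = {B, B', {1..n} - (B \<union> B')}" for B B' :: "nat set"
  have sub: "\<Y> \<subseteq> (\<Union>B\<in>F1. k B ` f B)"
  proof
    fix G assume G: "G \<in> \<Y>"
    have GP: "G \<in> Pi_part n 3" using G Y by blast
    obtain B where B: "B \<in> F1" "B \<in> G" using cr F1 G by blast
    obtain B' where B': "B' \<in> f B" "B' \<in> G" using cr f G by blast
    have "B' \<noteq> B" using f B' by metis
    then have "G = k B B'" unfolding k_def using KL[OF GP B(2) B'(2)] by auto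
    then show "G \<in> (\<Union>B\<in>F1. k B ` f B)" using B B' by blast
  qed
  have fF1: "finite F1" using finite_blocks[OF F1P] .
  have "card \<Y> \<le> card (\<Union>B\<in>F1. k B ` f B)"
    by (rule card_mono[OF _ sub]) (use fF1 finite_blocks f X in blast)
  also have "\<dots> \<le> (\<Sum>B\<in>F1. card (k B ` f B))" by (rule card_UN_le[OF fF1])
  also have "\<dots> \<le> (\<Sum>B\<in>F1. 3)"
  proof (rule sum_mono)
    fix B assume "B \<in> F1"
    have "f B \<in> Pi_part n 3" using f X by blast
    then have "card (f B) = 3" using PiD(2) by blast
    then show "card (k B ` f B) \<le> 3" using card_image_le finite_blocks \<open>f B \<in> Pi_part n 3\<close>
      by metis
  qed
  also have "\<dots> = 9" using PiD(2)[OF F1P] by simp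
  finally show ?thesis .
qed

lemma sub_contra: "X \<subseteq> Y \<Longrightarrow> X \<noteq> {} \<Longrightarrow> w \<in> Y \<Longrightarrow> w \<notin> X \<Longrightarrow> (X = Y \<or> X \<inter> Y = {}) \<Longrightarrow> False"
  by blast
lemma two_contra: "c \<in> X \<Longrightarrow> c \<notin> Y \<Longrightarrow> w \<in> X \<Longrightarrow> w \<in> Y \<Longrightarrow> (X = Y \<or> X \<inter> Y = {}) \<Longrightarrow> False"
  by blast

lemma log6: "(2::real) \<le> log 2 6"
proof -
  have "log 2 (4::real) \<le> log 2 6" by simp
  moreover have "log 2 (4::real) = 2"
  proof -
    have "log 2 ((2::real) ^ (2::nat)) = real (2::nat)" by (rule log_pow_cancel) simp_all
    then show ?thesis by simp
  qed
  ultimately show ?thesis by simp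
qed

lemma n_big: assumes "real n \<ge> 2 * L 3 1" shows "n \<ge> 16"
proof -
  have "L 3 1 = 2 + 3 * log 2 6" unfolding L_def by simp
  then have "real n \<ge> 16" using assms log6 by simp
  then show ?thesis by simp
qed

lemma case_one:
  assumes hG: "\<G> \<subseteq> Pi_part n 3" and PP: "P \<in> Pi_part n 3"
    and cr: "\<forall>G\<in>\<G>. \<exists>C. C \<in> P \<and> C \<in> G" and n: "n \<ge> 16"
  shows "card \<G> < 2 ^ (n - 1)"
proof -
  obtain B1 B2 B3 where P: "P = {B1, B2, B3}" "B1 \<noteq> B2" "B2 \<noteq> B3" "B1 \<noteq> B3"
    using PiD(2)[OF PP] unfolding card_3_iff by blast
  have inP: "B1 \<in> P" "B2 \<in> P" "B3 \<in> P" using P(1) by simp_all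
  define S where "S B = {Q \<in> Pi_part n 3. B \<in> Q}" for B
  have sub: "\<G> \<subseteq> S B1 \<union> S B2 \<union> S B3"
  proof
    fix G assume G: "G \<in> \<G>"
    then obtain C where C: "C \<in> P" "C \<in> G" using cr by blast
    have "G \<in> Pi_part n 3" using G hG by blast
    moreover have "C = B1 \<or> C = B2 \<or> C = B3" using C(1) unfolding P(1) by (rule in3)
    ultimately show "G \<in> S B1 \<union> S B2 \<union> S B3" using C(2) unfolding S_def by blast
  qed
  have fS: "finite (S B)" for B unfolding S_def using finite_Pi by simp
  have "card \<G> \<le> card (S B1 \<union> S B2 \<union> S B3)" by (rule card_mono[OF _ sub]) (simp add: fS)
  also have "\<dots> \<le> card (S B1) + card (S B2) + card (S B3)"
    by (metis (no_types, lifting) add_le_mono card_Un_le le_trans order_refl)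
  finally have c1: "card \<G> \<le> card (S B1) + card (S B2) + card (S B3)" .
  have cu: "card (S B) + 1 \<le> 2 ^ (n - card B - 1)" for B unfolding S_def by (rule count_up)
  have fB: "finite B" "B \<noteq> {}" if "B \<in> P" for B
    using PiD(3,4)[OF PP that] finite_subset by auto
  have d: "B1 \<inter> B2 = {}" "B1 \<inter> B3 = {}" "B2 \<inter> B3 = {}" using PiD(5)[OF PP] inP P(2-4) by auto
  have "B1 \<union> B2 \<union> B3 = {1..n}" using PiD(1)[OF PP] unfolding P(1) by (simp add: Un_assoc)
  then have "card (B1 \<union> B2 \<union> B3) = n" by simp
  moreover have "card (B1 \<union> B2 \<union> B3) = card B1 + card B2 + card B3"
    using d fB inP by (simp add: card_Un_disjoint Int_Un_distrib2)
  ultimately have sum: "n = card B1 + card B2 + card B3" by simp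
  have pos: "card B1 \<ge> 1" "card B2 \<ge> 1" "card B3 \<ge> 1" using fB inP
    by (simp_all add: Suc_le_eq card_gt_0_iff)
  have "card (S B1) + 1 + (card (S B2) + 1) + (card (S B3) + 1) \<le>
        2 ^ (n - card B1 - 1) + 2 ^ (n - card B2 - 1) + 2 ^ (n - card B3 - 1)"
    using cu[of B1] cu[of B2] cu[of B3] by linarith
  also have "\<dots> \<le> 2 ^ (n - 1) + 2"
    using pow3[OF pos] unfolding sum by simp
  finally show ?thesis using c1 by linarith
qed


lemma case_two:
  assumes hF: "\<F> \<subseteq> Pi_part n 3" and hG: "\<G> \<subseteq> Pi_part n 3"
    and crFG: "\<forall>F\<in>\<F>. \<forall>G\<in>\<G>. \<exists>C. C \<in> F \<and> C \<in> G"
    and hA: "\<forall>F\<in>\<F>. A \<in> F" and G0: "G0 \<in> \<G>" "A \<notin> G0"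
    and c2: "card \<F> = 2" and hlow: "2 ^ (n - 1) \<le> card \<F> * card \<G>" and n: "n \<ge> 16"
  shows "\<exists>a M. is_partition M \<and> card M = 3 \<and> \<Union>M \<subseteq> {1..n} \<and> {a} \<in> M \<and>
           card (\<Union>M) < n \<and>
           \<F> = A_fam n 3 {{a}} M \<and> \<G> = B_fam n 3 {{a}} M"
proof -
  define Cs where "Cs = {C \<in> G0. C \<inter> A = {}}"
  define h where "h C = {A, C, {1..n} - (A \<union> C)}" for C
  have Fne: "\<F> \<noteq> {}" using c2 by auto
  have cl1: "\<F> \<subseteq> h ` Cs" using common_le2(1)[OF hF hG crFG hA G0] unfolding Cs_def h_def .
  have cl2: "card Cs \<le> 2" using common_le2(2)[OF hF hG crFG hA G0 Fne] unfolding Cs_def .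
  have cl3: "\<forall>C\<in>Cs. C \<noteq> {} \<and> C \<subseteq> {1..n}" using common_le2(3)[OF hF hG crFG hA G0] unfolding Cs_def .
  have cl4: "A \<noteq> {}" "A \<subseteq> {1..n}" using common_le2(4)[OF hF hG crFG hA G0 Fne] by auto
  have G0P: "G0 \<in> Pi_part n 3" using G0 hG by blast
  have fCs: "finite Cs" unfolding Cs_def using finite_blocks[OF G0P] by simp
  have "2 \<le> card (h ` Cs)" using c2 cl1 card_mono[OF finite_imageI[OF fCs] cl1] by simp
  moreover have "card (h ` Cs) \<le> card Cs" using card_image_le[OF fCs] .
  ultimately have cCs: "card Cs = 2" and chCs: "card (h ` Cs) = 2" using cl2 by linarith+
  have Fh: "\<F> = h ` Cs" using card_subset_eq[OF finite_imageI[OF fCs] cl1] c2 chCs by simp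
  obtain C1 C2 where Cs2: "Cs = {C1, C2}" "C1 \<noteq> C2" using cCs unfolding card_2_iff by blast
  have FF: "\<F> = {h C1, h C2}" using Fh Cs2 by simp
  have hne: "h C1 \<noteq> h C2"
  proof
    assume "h C1 = h C2" then have "\<F> = {h C2}" using FF by simp
    then show False using c2 by simp
  qed
  have inCs: "C1 \<in> Cs" "C2 \<in> Cs" using Cs2(1) by simp_all
  have Cs_mem: "C \<in> G0" "C \<inter> A = {}" if "C \<in> Cs" for C using that unfolding Cs_def by simp_all
  have Cs_ne: "C \<noteq> {}" "C \<subseteq> {1..n}" if "C \<in> Cs" for C using that cl3 by blast+
  have C1: "C1 \<in> G0" "C1 \<inter> A = {}" "C1 \<noteq> {}" "C1 \<subseteq> {1..n}"
    using Cs_mem[OF inCs(1)] Cs_ne[OF inCs(1)] by blast+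
  have C2: "C2 \<in> G0" "C2 \<inter> A = {}" "C2 \<noteq> {}" "C2 \<subseteq> {1..n}"
    using Cs_mem[OF inCs(2)] Cs_ne[OF inCs(2)] by blast+
  have C12: "C1 \<inter> C2 = {}" using PiD(5)[OF G0P C1(1) C2(1) Cs2(2)] .
  define W where "W = {1..n} - (A \<union> C1 \<union> C2)"
  define R1 where "R1 = {1..n} - (A \<union> C1)"
  define R2 where "R2 = {1..n} - (A \<union> C2)"
  have hC1: "h C1 = {A, C1, R1}" unfolding h_def R1_def by simp
  have hC2: "h C2 = {A, C2, R2}" unfolding h_def R2_def by simp
  have Wne: "W \<noteq> {}"
  proof
    assume W0: "W = {}"
    have "R1 = C2" using W0 C1 C2 C12 cl4 unfolding W_def R1_def by blast
    moreover have "R2 = C1" using W0 C1 C2 C12 cl4 unfolding W_def R2_def by blast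
    ultimately have "h C1 = h C2" unfolding hC1 hC2 by (simp add: insert_commute)
    then show False using hne by simp
  qed
  then obtain w where w: "w \<in> W" by blast
  obtain c2 where c2e: "c2 \<in> C2" using C2(3) by blast
  have wf: "w \<in> R1" "w \<in> R2" "w \<notin> C1" "w \<notin> C2" using w unfolding W_def R1_def R2_def by auto
  have sf: "C1 \<subseteq> R2" "C2 \<subseteq> R1" using C1 C2 C12 unfolding R1_def R2_def by blast+
  have c2f: "c2 \<in> R1" "c2 \<notin> R2" using c2e sf unfolding R2_def by auto
  define E where "E = {C1, C2, {1..n} - (C1 \<union> C2)}"
  define SA where "SA = {Q \<in> Pi_part n 3. A \<in> Q}"
  have Gsub: "\<G> \<subseteq> insert E SA"
  proof
    fix G assume G: "G \<in> \<G>"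
    have GP: "G \<in> Pi_part n 3" using G hG by blast
    have dj: "Z1 = Z2 \<or> Z1 \<inter> Z2 = {}" if "Z1 \<in> G" "Z2 \<in> G" for Z1 Z2
      using PiD(5)[OF GP that] by blast
    show "G \<in> insert E SA"
    proof (cases "A \<in> G")
      case True then show ?thesis unfolding SA_def using GP by blast
    next
      case False
      have "h C1 \<in> \<F>" "h C2 \<in> \<F>" using FF by simp_all
      then obtain X Y where X: "X \<in> h C1" "X \<in> G" and Y: "Y \<in> h C2" "Y \<in> G"
        using crFG G by meson
      have XA: "X \<noteq> A" using X(2) False by blast
      have YA: "Y \<noteq> A" using Y(2) False by blast
      have "X = A \<or> X = C1 \<or> X = R1" using X(1) unfolding hC1 by (rule in3)
      then have Xc: "X = C1 \<or> X = R1" using XA by simp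
      have "Y = A \<or> Y = C2 \<or> Y = R2" using Y(1) unfolding hC2 by (rule in3)
      then have Yc: "Y = C2 \<or> Y = R2" using YA by simp
      show ?thesis
      proof (cases "X = C1")
        case XC: True
        show ?thesis
        proof (cases "Y = C2")
          case True
          have "G = E" using KL[OF GP X(2) Y(2)] Cs2(2) XC True unfolding E_def by simp
          then show ?thesis by simp
        next
          case False
          then have "Y = R2" using Yc by simp
          then have "False" using sub_contra[OF sf(1) C1(3) wf(2) wf(3)] dj[OF X(2) Y(2)] XC by simp
          then show ?thesis ..
        qed
      next
        case XR: False
        then have XR1: "X = R1" using Xc by simp
        show ?thesis
        proof (cases "Y = C2")
          case True
          have "False" using sub_contra[OF sf(2) C2(3) wf(1) wf(4)] dj[OF Y(2) X(2)] XR1 True by simp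
          then show ?thesis ..
        next
          case False
          then have "Y = R2" using Yc by simp
          then have "False" using two_contra[OF c2f(1) c2f(2) wf(1) wf(2)] dj[OF X(2) Y(2)] XR1 by simp
          then show ?thesis ..
        qed
      qed
    qed
  qed
  have fSA: "finite SA" unfolding SA_def using finite_Pi by simp
  have cSA: "card SA + 1 \<le> 2 ^ (n - card A - 1)" unfolding SA_def by (rule count_up)
  have "card \<G> \<le> card (insert E SA)" by (rule card_mono[OF _ Gsub]) (simp add: fSA)
  also have "\<dots> \<le> card SA + 1" using fSA by (simp add: card_insert_if)
  finally have cG: "card \<G> \<le> card SA + 1" .
  have p2: "2 ^ (n - 1) = 2 * (2::nat) ^ (n - 2)"
  proof -
    have "n - 1 = Suc (n - 2)" using n by simp
    then show ?thesis by simp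
  qed
  have lowG: "2 ^ (n - 2) \<le> card \<G>" using hlow c2 p2 by simp
  have fA: "finite A" using cl4 finite_subset by blast
  have cA: "card A = 1"
  proof (rule ccontr)
    assume "card A \<noteq> 1"
    moreover have "card A \<noteq> 0" using fA cl4 by simp
    ultimately have "card A \<ge> 2" by simp
    then have "n - card A - 1 \<le> n - 3" by simp
    then have "(2::nat) ^ (n - card A - 1) \<le> 2 ^ (n - 3)" by (rule power_increasing) simp
    moreover have "(2::nat) ^ (n - 3) < 2 ^ (n - 2)" using n by (intro power_strict_increasing) simp_all
    ultimately show False using lowG cG cSA by linarith
  qed
  then obtain a where Aa: "A = {a}" by (rule card_1_singletonE)
  have Geq: "\<G> = insert E SA"
  proof (rule card_subset_eq)
    show "finite (insert E SA)" using fSA by simp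
    show "\<G> \<subseteq> insert E SA" by (rule Gsub)
    have a1: "card (insert E SA) \<le> card SA + 1" using fSA by (simp add: card_insert_if)
    have a2: "n - card A - 1 = n - 2" using cA by simp
    have a3: "card \<G> \<le> card (insert E SA)" by (rule card_mono[OF _ Gsub]) (simp add: fSA)
    show "card \<G> = card (insert E SA)" using a1 a3 cSA lowG unfolding a2 by linarith
  qed
  define M where "M = {A, C1, C2}"
  have aA: "a \<in> A" using Aa by simp
  have AC1: "A \<noteq> C1" by (rule neqI[OF aA]) (use aA C1(2) in blast)
  have AC2: "A \<noteq> C2" by (rule neqI[OF aA]) (use aA C2(2) in blast)
  have part: "is_partition M" unfolding is_partition_def M_def
    using cl4(1) C1(2,3) C2(2,3) C12 by (simp add: Int_commute)
  have cM: "card M = 3" unfolding M_def using AC1 AC2 Cs2(2) by simp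
  have uM: "\<Union>M = A \<union> C1 \<union> C2" unfolding M_def by (simp add: Un_assoc)
  have uMsub: "\<Union>M \<subseteq> {1..n}" unfolding uM using cl4 C1 C2 by blast
  have aM: "{a} \<in> M" unfolding M_def Aa by simp
  have cuM: "card (\<Union>M) < n"
  proof -
    have "\<Union>M \<subset> {1..n}" using uMsub w unfolding uM W_def by blast
    then have "card (\<Union>M) < card {1..n}" by (rule psubset_card_mono[rotated]) simp
    then show ?thesis by simp
  qed
  have MA: "M - {A} = {C1, C2}" unfolding M_def using AC1 AC2 by auto
  have Feq: "\<F> = A_fam n 3 {A} M"
  proof
    show "\<F> \<subseteq> A_fam n 3 {A} M"
    proof
      fix F assume F: "F \<in> \<F>"
      have "F \<in> Pi_part n 3" "A \<in> F" using F hF hA by auto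
      moreover have "C1 \<in> F \<or> C2 \<in> F" using F unfolding FF hC1 hC2 by auto
      ultimately show "F \<in> A_fam n 3 {A} M" unfolding A_fam_def MA by auto
    qed
    show "A_fam n 3 {A} M \<subseteq> \<F>"
    proof
      fix F assume F: "F \<in> A_fam n 3 {A} M"
      then have FP: "F \<in> Pi_part n 3" and AF: "A \<in> F" and CF: "C1 \<in> F \<or> C2 \<in> F"
        unfolding A_fam_def MA by auto
      from CF show "F \<in> \<F>"
      proof
        assume "C1 \<in> F"
        then have "F = h C1" using KL[OF FP AF _ AC1] unfolding h_def by simp
        then show ?thesis using FF by simp
      next
        assume "C2 \<in> F"
        then have "F = h C2" using KL[OF FP AF _ AC2] unfolding h_def by simp
        then show ?thesis using FF by simp
      qed
    qed
  qed
  have Beq: "B_fam n 3 {A} M = insert E SA"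
  proof -
    have e: "A \<union> ({1..n} - \<Union>M) = {1..n} - (C1 \<union> C2)"
      unfolding uM using cl4 C1(2) C2(2) by blast
    have "{(M - {B}) \<union> {B \<union> ({1..n} - \<Union>M)} | B. B \<in> {A}} = {(M - {A}) \<union> {A \<union> ({1..n} - \<Union>M)}}"
      by blast
    also have "\<dots> = {E}" unfolding MA e E_def by (simp add: insert_commute)
    finally have "{(M - {B}) \<union> {B \<union> ({1..n} - \<Union>M)} | B. B \<in> {A}} = {E}" .
    moreover have "{F \<in> Pi_part n 3. {A} \<subseteq> F} = SA" unfolding SA_def by simp
    ultimately show ?thesis unfolding B_fam_def by simp
  qed
  show ?thesis
    apply (rule exI[of _ a], rule exI[of _ M])
    using part cM uMsub aM cuM Feq Beq Geq unfolding Aa by simp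
qed



theorem mainTheorem7:
  fixes n :: nat and \<F> \<G> :: "nat set set set"
  assumes hn: "real n \<ge> 2 * L 3 1"
    and hF: "\<F> \<subseteq> Pi_part n 3" and hG: "\<G> \<subseteq> Pi_part n 3"
    and hcross: "cross_intersecting \<F> \<G>"
    and hnt: "non_trivial \<F> \<G>"
    and hmax: "\<forall>\<F>' \<G>'. \<F>' \<subseteq> Pi_part n 3 \<and> \<G>' \<subseteq> Pi_part n 3 \<and>
                 cross_intersecting \<F>' \<G>' \<and> non_trivial \<F>' \<G>'
                 \<longrightarrow> card \<F>' * card \<G>' \<le> card \<F> * card \<G>"
    and hle: "card \<F> \<le> card \<G>"
  shows "\<exists>a M. is_partition M \<and> card M = 3 \<and> \<Union>M \<subseteq> {1..n} \<and> {a} \<in> M \<and>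
           card (\<Union>M) < n \<and>
           \<F> = A_fam n 3 {{a}} M \<and> \<G> = B_fam n 3 {{a}} M"
proof -
  have n: "n \<ge> 16" using n_big[OF hn] .
  obtain F' G' where FG': "F' \<subseteq> Pi_part n 3" "G' \<subseteq> Pi_part n 3" "cross_intersecting F' G'"
     "non_trivial F' G'" "2^(n-1) \<le> card F' * card G'"
    using construction[of n] n by auto
  have "card F' * card G' \<le> card \<F> * card \<G>"
    using hmax FG'(1-4) by blast
  then have hlow: "2 ^ (n - 1) \<le> card \<F> * card \<G>"
    using FG'(5) by linarith
  have big: "(81::nat) < 2 ^ (n - 1)"
  proof -
    have "(2::nat) ^ 7 \<le> 2 ^ (n - 1)" by (rule power_increasing) (use n in simp_all)
    then show ?thesis by simp
  qed
  have crFG: "\<forall>F\<in>\<F>. \<forall>G\<in>\<G>. \<exists>C. C \<in> F \<and> C \<in> G" using cross_ex[OF hcross] by blast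
  have crGF: "\<forall>G\<in>\<G>. \<forall>F\<in>\<F>. \<exists>C. C \<in> G \<and> C \<in> F" using cross_ex[OF hcross] by blast
  have fF: "finite \<F>" using finite_subset[OF hF finite_Pi] .
  have fG: "finite \<G>" using finite_subset[OF hG finite_Pi] .
  have Fne: "\<F> \<noteq> {}"
  proof
    assume "\<F> = {}" then show False using hlow big by simp
  qed
  have Gne: "\<G> \<noteq> {}"
  proof
    assume "\<G> = {}" then show False using hlow big by simp
  qed
  show ?thesis
  proof (cases "\<exists>A. \<forall>F\<in>\<F>. A \<in> F")
    case True
    then obtain A where hA: "\<forall>F\<in>\<F>. A \<in> F" by blast
    have "\<exists>G0\<in>\<G>. A \<notin> G0"
    proof (rule ccontr)
      assume "\<not> (\<exists>G0\<in>\<G>. A \<notin> G0)"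
      then have "\<forall>P\<in>\<F> \<union> \<G>. A \<in> P" using hA by blast
      then show False using hnt unfolding non_trivial_def by blast
    qed
    then obtain G0 where G0: "G0 \<in> \<G>" "A \<notin> G0" by blast
    define Cs where "Cs = {C \<in> G0. C \<inter> A = {}}"
    have cl1: "\<F> \<subseteq> (\<lambda>C. {A, C, {1..n} - (A \<union> C)}) ` Cs"
      using common_le2(1)[OF hF hG crFG hA G0] unfolding Cs_def .
    have cl2: "card Cs \<le> 2" using common_le2(2)[OF hF hG crFG hA G0 Fne] unfolding Cs_def .
    have G0P: "G0 \<in> Pi_part n 3" using G0 hG by blast
    have fCs: "finite Cs" unfolding Cs_def using finite_blocks[OF G0P] by simp
    have "card \<F> \<le> card ((\<lambda>C. {A, C, {1..n} - (A \<union> C)}) ` Cs)"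
      by (rule card_mono[OF _ cl1]) (simp add: fCs)
    also have "\<dots> \<le> card Cs" by (rule card_image_le[OF fCs])
    finally have cF2: "card \<F> \<le> 2" using cl2 by linarith
    have "card \<F> \<noteq> 0" using fF Fne by simp
    then consider "card \<F> = 1" | "card \<F> = 2" using cF2 by linarith
    then show ?thesis
    proof cases
      case 1
      then obtain P where FP: "\<F> = {P}" by (rule card_1_singletonE)
      have PP: "P \<in> Pi_part n 3" using FP hF by simp
      have cr: "\<forall>G\<in>\<G>. \<exists>C. C \<in> P \<and> C \<in> G" using crFG FP by simp
      have "card \<G> < 2 ^ (n - 1)" by (rule case_one[OF hG PP cr n])
      then have False using hlow 1 by simp
      then show ?thesis ..
    next
      case 2
      show ?thesis by (rule case_two[OF hF hG crFG hA G0 2 hlow n])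
    qed
  next
    case nF: False
    show ?thesis
    proof (cases "\<exists>A. \<forall>G\<in>\<G>. A \<in> G")
      case True
      then obtain A where hA: "\<forall>G\<in>\<G>. A \<in> G" by blast
      have "\<exists>F0\<in>\<F>. A \<notin> F0"
      proof (rule ccontr)
        assume "\<not> (\<exists>F0\<in>\<F>. A \<notin> F0)"
        then have "\<forall>P\<in>\<F> \<union> \<G>. A \<in> P" using hA by blast
        then show False using hnt unfolding non_trivial_def by blast
      qed
      then obtain F0 where F0: "F0 \<in> \<F>" "A \<notin> F0" by blast
      define Cs where "Cs = {C \<in> F0. C \<inter> A = {}}"
      have cl1: "\<G> \<subseteq> (\<lambda>C. {A, C, {1..n} - (A \<union> C)}) ` Cs"
        using common_le2(1)[OF hG hF crGF hA F0] unfolding Cs_def .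
      have cl2: "card Cs \<le> 2" using common_le2(2)[OF hG hF crGF hA F0 Gne] unfolding Cs_def .
      have F0P: "F0 \<in> Pi_part n 3" using F0 hF by blast
      have fCs: "finite Cs" unfolding Cs_def using finite_blocks[OF F0P] by simp
      have "card \<G> \<le> card ((\<lambda>C. {A, C, {1..n} - (A \<union> C)}) ` Cs)"
        by (rule card_mono[OF _ cl1]) (simp add: fCs)
      also have "\<dots> \<le> card Cs" by (rule card_image_le[OF fCs])
      finally have cG2: "card \<G> \<le> 2" using cl2 by linarith
      then have "card \<F> \<le> 2" using hle by linarith
      then have "card \<F> * card \<G> \<le> 2 * 2" using cG2 by (intro mult_le_mono)
      then have False using hlow big by linarith
      then show ?thesis ..
    next
      case False
      have c1: "card \<G> \<le> 9" by (rule nocommon[OF hF hG crFG Fne nF])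
      have c2: "card \<F> \<le> 9" by (rule nocommon[OF hG hF crGF Gne False])
      have "card \<F> * card \<G> \<le> 9 * 9" using c1 c2 by (intro mult_le_mono)
      then have False using hlow big by linarith
      then show ?thesis ..
    qed
  qed
qed

end
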